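(* A homeomorphism $f$ of a compact metric space $(X,d)$ has the L-shadowing property if and only if $f$ has the shadowing property and for every $\epsilon>0$ there is $\delta>0$ such that $d(x,y)<\delta$ implies $V^s_\epsilon(x)\cap V^u_\epsilon(y)\neq\emptyset$.
   Context: L-shadowing: for every $\varepsilon>0$ there is $\delta>0$ such that every sequence $(x_k)_{k\in\mathbb{Z}}$ with $d(f(x_k),x_{k+1})\le\delta$ for all $k$ and $d(f(x_k),x_{k+1})\to0$ as $|k|\to\infty$ admits $z$ with $d(f^k(z),x_k)\le\varepsilon$ for all $k$ and $d(f^k(z),x_k)\to0$ as $|k|\to\infty$. Shadowing: for every $\varepsilon>0$ there is $\delta>0$ such that for every sequence $(x_k)_{k\in\mathbb{Z}}$ with $d(f(x_k),x_{k+1})<\delta$ for all $k$ there is $y$ with $d(f^k(y),x_k)<\varepsilon$ for all $k\in\mathbb{Z}$. For $x\in X$, $\epsilon>0$: $W^s_\epsilon(x)=\{y: d(f^n(x),f^n(y))\le\epsilon\ \forall n\ge0\}$, $W^u_\epsilon(x)=\{y: d(f^{-n}(x),f^{-n}(y))\le\epsilon\ \forall n\ge0\}$, $W^s(x)=\{y: d(f^n(x),f^n(y))\to0 \text{ as } n\to+\infty\}$, $W^u(x)=\{y: d(f^{-n}(x),f^{-n}(y))\to0 \text{ as } n\to+\infty\}$, $V^s_\epsilon(x)=W^s(x)\cap W^s_\epsilon(x)$, $V^u_\epsilon(x)=W^u(x)\cap W^u_\epsilon(x)$. *)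

theory Defs
  imports "HOL-Analysis.Analysis"
begin

text \<open>Setting: a compact metric space X (a subset of a metric-space type with the
induced metric) and a homeomorphism f of X onto X with inverse g
(homeomorphism X X f g).\<close>

definition iter_int :: "('a \<Rightarrow> 'a) \<Rightarrow> ('a \<Rightarrow> 'a) \<Rightarrow> int \<Rightarrow> 'a \<Rightarrow> 'a" where
  "iter_int f g k = (if 0 \<le> k then (f ^^ nat k) else (g ^^ nat (- k)))"

definition shadowing :: "'a::metric_space set \<Rightarrow> ('a \<Rightarrow> 'a) \<Rightarrow> ('a \<Rightarrow> 'a) \<Rightarrow> bool" where
  "shadowing X f g \<longleftrightarrow>
    (\<forall>\<epsilon>>0. \<exists>\<delta>>0. \<forall>x::int \<Rightarrow> 'a. (\<forall>k. x k \<in> X) \<longrightarrow>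
        (\<forall>k. dist (f (x k)) (x (k+1)) < \<delta>) \<longrightarrow>
        (\<exists>y\<in>X. \<forall>k. dist (iter_int f g k y) (x k) < \<epsilon>))"

definition L_shadowing :: "'a::metric_space set \<Rightarrow> ('a \<Rightarrow> 'a) \<Rightarrow> ('a \<Rightarrow> 'a) \<Rightarrow> bool" where
  "L_shadowing X f g \<longleftrightarrow>
    (\<forall>\<epsilon>>0. \<exists>\<delta>>0. \<forall>x::int \<Rightarrow> 'a. (\<forall>k. x k \<in> X) \<longrightarrow>
        (\<forall>k. dist (f (x k)) (x (k+1)) \<le> \<delta>) \<longrightarrow>
        ((\<lambda>k. dist (f (x k)) (x (k+1))) \<longlongrightarrow> 0) at_top \<longrightarrow>
        ((\<lambda>k. dist (f (x k)) (x (k+1))) \<longlongrightarrow> 0) at_bot \<longrightarrow>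
        (\<exists>z\<in>X. (\<forall>k. dist (iter_int f g k z) (x k) \<le> \<epsilon>) \<and>
               ((\<lambda>k. dist (iter_int f g k z) (x k)) \<longlongrightarrow> 0) at_top \<and>
               ((\<lambda>k. dist (iter_int f g k z) (x k)) \<longlongrightarrow> 0) at_bot))"

definition Ws_loc :: "'a::metric_space set \<Rightarrow> ('a \<Rightarrow> 'a) \<Rightarrow> real \<Rightarrow> 'a \<Rightarrow> 'a set" where
  "Ws_loc X f e x = {y\<in>X. \<forall>n. dist ((f ^^ n) x) ((f ^^ n) y) \<le> e}"

definition Wu_loc :: "'a::metric_space set \<Rightarrow> ('a \<Rightarrow> 'a) \<Rightarrow> real \<Rightarrow> 'a \<Rightarrow> 'a set" where
  "Wu_loc X g e x = {y\<in>X. \<forall>n. dist ((g ^^ n) x) ((g ^^ n) y) \<le> e}"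

definition Ws :: "'a::metric_space set \<Rightarrow> ('a \<Rightarrow> 'a) \<Rightarrow> 'a \<Rightarrow> 'a set" where
  "Ws X f x = {y\<in>X. ((\<lambda>n. dist ((f ^^ n) x) ((f ^^ n) y)) \<longlongrightarrow> 0) sequentially}"

definition Wu :: "'a::metric_space set \<Rightarrow> ('a \<Rightarrow> 'a) \<Rightarrow> 'a \<Rightarrow> 'a set" where
  "Wu X g x = {y\<in>X. ((\<lambda>n. dist ((g ^^ n) x) ((g ^^ n) y)) \<longlongrightarrow> 0) sequentially}"

definition Vs :: "'a::metric_space set \<Rightarrow> ('a \<Rightarrow> 'a) \<Rightarrow> real \<Rightarrow> 'a \<Rightarrow> 'a set" where
  "Vs X f e x = Ws X f x \<inter> Ws_loc X f e x"

definition Vu :: "'a::metric_space set \<Rightarrow> ('a \<Rightarrow> 'a) \<Rightarrow> real \<Rightarrow> 'a \<Rightarrow> 'a set" where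
  "Vu X g e x = Wu X g x \<inter> Wu_loc X g e x"

end

theory Submission
  imports Defs
begin


lemma lim0_top: "((h::int\<Rightarrow>real) \<longlongrightarrow> 0) at_top \<longleftrightarrow> (\<forall>e>0. \<exists>K. \<forall>k\<ge>K. \<bar>h k\<bar> < e)"
  by (simp add: tendsto_iff eventually_at_top_linorder dist_real_def)
lemma lim0_bot: "((h::int\<Rightarrow>real) \<longlongrightarrow> 0) at_bot \<longleftrightarrow> (\<forall>e>0. \<exists>K. \<forall>k\<le>K. \<bar>h k\<bar> < e)"
  by (simp add: tendsto_iff eventually_at_bot_linorder dist_real_def)
lemma lim0_seq: "((h::nat\<Rightarrow>real) \<longlongrightarrow> 0) sequentially \<longleftrightarrow> (\<forall>e>0. \<exists>K. \<forall>k\<ge>K. \<bar>h k\<bar> < e)"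
  by (simp add: lim_sequentially dist_real_def)

locale hsys =
  fixes X :: "'a::metric_space set" and F G :: "'a \<Rightarrow> 'a"
  assumes cpt: "compact X" and hom: "homeomorphism X X F G"
begin

lemma FX: "x \<in> X \<Longrightarrow> F x \<in> X" and GX: "x \<in> X \<Longrightarrow> G x \<in> X"
  and GF: "x \<in> X \<Longrightarrow> G (F x) = x" and FG: "x \<in> X \<Longrightarrow> F (G x) = x"
  and contF: "continuous_on X F" and contG: "continuous_on X G"
  using hom unfolding homeomorphism_def by auto

lemma sym: "hsys X G F"
  using cpt hom homeomorphism_sym unfolding hsys_def by blast

lemma FnX: "x \<in> X \<Longrightarrow> (F^^n) x \<in> X"
  by (induction n) (auto simp: FX)
lemma GnX: "x \<in> X \<Longrightarrow> (G^^n) x \<in> X"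
  by (induction n) (auto simp: GX)

lemma Gn_Fn: "x \<in> X \<Longrightarrow> n \<le> N \<Longrightarrow> (G^^n) ((F^^N) x) = (F^^(N-n)) x"
proof (induction n)
  case 0 then show ?case by simp
next
  case (Suc n)
  then have "N - n = Suc (N - Suc n)" by simp
  then have "(F^^(N-n)) x = F ((F^^(N - Suc n)) x)" by simp
  with Suc show ?case by (simp add: GF FnX)
qed

lemma Fn_Gn: "x \<in> X \<Longrightarrow> (F^^n) ((G^^n) x) = x"
proof (induction n)
  case 0 then show ?case by simp
next
  case (Suc n)
  have "(F^^Suc n) ((G^^Suc n) x) = (F^^n) (F (G ((G^^n) x)))"
    by (simp add: funpow_swap1)
  also have "\<dots> = x" using Suc by (simp add: FG GnX)
  finally show ?case .
qed

lemma contFn: "continuous_on X (F^^n)"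
proof (induction n)
  case 0 then show ?case by (simp add: continuous_on_id)
next
  case (Suc n)
  have "(F^^Suc n) = F \<circ> (F^^n)" by simp
  moreover have "(F^^n) ` X \<subseteq> X" using FnX by auto
  ultimately show ?case using Suc continuous_on_compose continuous_on_subset contF by metis
qed

lemma ucF: "e > 0 \<Longrightarrow> \<exists>d>0. \<forall>a\<in>X. \<forall>b\<in>X. dist a b < d \<longrightarrow> dist (F a) (F b) < e"
  using compact_uniformly_continuous[OF contF cpt] unfolding uniformly_continuous_on_def
  by metis

lemma forward:
  assumes P: "\<forall>\<gamma>>0. \<exists>\<delta>>0. \<forall>x::nat\<Rightarrow>'a. (\<forall>k. x k \<in> X) \<longrightarrow> (\<forall>k. dist (F (x k)) (x (Suc k)) < \<delta>) \<longrightarrow> (\<exists>y\<in>X. \<forall>k. dist ((F^^k) y) (x k) < \<gamma>)"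
  and Q: "\<forall>\<epsilon>>0. \<exists>\<delta>>0. \<forall>a\<in>X. \<forall>b\<in>X. dist a b < \<delta> \<longrightarrow> (\<exists>v\<in>X. (\<forall>n. dist ((F^^n) a) ((F^^n) v) \<le> \<epsilon>) \<and> ((\<lambda>n. dist ((F^^n) a) ((F^^n) v)) \<longlonglongrightarrow> 0) \<and> (\<forall>n. dist ((G^^n) b) ((G^^n) v) \<le> \<epsilon>))"
  and eta: "\<eta> > 0"
  shows "\<exists>\<delta>>0. \<forall>x::nat\<Rightarrow>'a. (\<forall>k. x k \<in> X) \<longrightarrow> (\<forall>k. dist (F (x k)) (x (Suc k)) \<le> \<delta>) \<longrightarrow> ((\<lambda>k. dist (F (x k)) (x (Suc k))) \<longlonglongrightarrow> 0) \<longrightarrow> (\<exists>z\<in>X. (\<forall>k. dist ((F^^k) z) (x k) \<le> \<eta>) \<and> ((\<lambda>k. dist ((F^^k) z) (x k)) \<longlonglongrightarrow> 0))"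
proof -
  define eps where "eps m = \<eta> / 2^(m+2)" for m :: nat
  have eps_pos: "eps m > 0" for m using eta by (simp add: eps_def)
  have eps_Suc: "eps (Suc m) = eps m / 2" for m by (simp add: eps_def)
  have eps_mono: "m \<le> m' \<Longrightarrow> eps m' \<le> eps m" for m m'
    unfolding eps_def using eta by (intro divide_left_mono power_increasing) auto
  have "\<forall>m. \<exists>d>0. \<forall>a\<in>X. \<forall>b\<in>X. dist a b < d \<longrightarrow> (\<exists>v\<in>X. (\<forall>n. dist ((F^^n) a) ((F^^n) v) \<le> eps m) \<and> ((\<lambda>n. dist ((F^^n) a) ((F^^n) v)) \<longlonglongrightarrow> 0) \<and> (\<forall>n. dist ((G^^n) b) ((G^^n) v) \<le> eps m))"
    using Q eps_pos by blast
  then have "\<exists>dV. \<forall>m. dV m > 0 \<and> (\<forall>a\<in>X. \<forall>b\<in>X. dist a b < dV m \<longrightarrow> (\<exists>v\<in>X. (\<forall>n. dist ((F^^n) a) ((F^^n) v) \<le> eps m) \<and> ((\<lambda>n. dist ((F^^n) a) ((F^^n) v)) \<longlonglongrightarrow> 0) \<and> (\<forall>n. dist ((G^^n) b) ((G^^n) v) \<le> eps m)))"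
    by (rule choice)
  then obtain dV where dV: "\<And>m. dV m > 0" "\<And>m a b. a \<in> X \<Longrightarrow> b \<in> X \<Longrightarrow> dist a b < dV m \<Longrightarrow> (\<exists>v\<in>X. (\<forall>n. dist ((F^^n) a) ((F^^n) v) \<le> eps m) \<and> ((\<lambda>n. dist ((F^^n) a) ((F^^n) v)) \<longlonglongrightarrow> 0) \<and> (\<forall>n. dist ((G^^n) b) ((G^^n) v) \<le> eps m))"
    by blast
  define gam where "gam m = min (eps m) (min (dV m) (dV (Suc m)) / 3)" for m
  have gam_pos: "gam m > 0" for m using eps_pos dV(1) by (simp add: gam_def)
  have gam_le: "gam m \<le> eps m" for m by (simp add: gam_def)
  have gam_dV1: "gam m \<le> dV (Suc m) / 3" for m by (simp add: gam_def)
  have gam_dV2: "gam (Suc m) \<le> dV (Suc m) / 3" for m by (simp add: gam_def)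
  have "\<forall>m. \<exists>d>0. \<forall>x::nat\<Rightarrow>'a. (\<forall>k. x k \<in> X) \<longrightarrow> (\<forall>k. dist (F (x k)) (x (Suc k)) < d) \<longrightarrow> (\<exists>y\<in>X. \<forall>k. dist ((F^^k) y) (x k) < gam m)"
    using P gam_pos by blast
  then have "\<exists>dS. \<forall>m. dS m > 0 \<and> (\<forall>x::nat\<Rightarrow>'a. (\<forall>k. x k \<in> X) \<longrightarrow> (\<forall>k. dist (F (x k)) (x (Suc k)) < dS m) \<longrightarrow> (\<exists>y\<in>X. \<forall>k. dist ((F^^k) y) (x k) < gam m))"
    by (rule choice)
  then obtain dS where dS: "\<And>m. dS m > 0" "\<And>m x. (\<forall>k. x k \<in> X) \<Longrightarrow> (\<forall>k. dist (F (x k)) (x (Suc k)) < dS m) \<Longrightarrow> \<exists>y\<in>X. \<forall>k. dist ((F^^k) y) (x k) < gam m"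
    by blast
  show ?thesis
  proof (intro exI[of _ "dS 0 / 2"] conjI allI impI)
    show "dS 0 / 2 > 0" using dS(1) by simp
    fix x :: "nat \<Rightarrow> 'a"
    assume xX: "\<forall>k. x k \<in> X" and xd: "\<forall>k. dist (F (x k)) (x (Suc k)) \<le> dS 0 / 2"
      and xl: "(\<lambda>k. dist (F (x k)) (x (Suc k))) \<longlonglongrightarrow> 0"
    define Inv where "Inv m s \<longleftrightarrow> (case s of (N, y, w) \<Rightarrow> y \<in> X \<and> w \<in> X \<and> (\<forall>j. dist ((F^^j) y) (x (N+j)) < gam m) \<and> (\<forall>j. dist ((F^^(N+j)) w) ((F^^j) y) \<le> eps m) \<and> ((\<lambda>j. dist ((F^^(N+j)) w) ((F^^j) y)) \<longlonglongrightarrow> 0))" for m and s :: "nat \<times> 'a \<times> 'a"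
    define R where "R m s s' \<longleftrightarrow> fst s < fst s' \<and> (\<forall>k \<le> fst s'. dist ((F^^k) (snd (snd s'))) ((F^^k) (snd (snd s))) \<le> eps (Suc m))" for m and s s' :: "nat \<times> 'a \<times> 'a"
    have init: "\<exists>s. Inv 0 s \<and> (0 = (0::nat) \<longrightarrow> fst s = 0)"
    proof -
      have hh: "dS 0 / 2 < dS 0" using dS(1)[of 0] by simp
      have "\<forall>k. dist (F (x k)) (x (Suc k)) < dS 0" using xd hh by (meson le_less_trans)
      then obtain y where y: "y \<in> X" "\<forall>k. dist ((F^^k) y) (x k) < gam 0"
        using dS(2)[of x 0] xX by blast
      then have "Inv 0 (0, y, y)" unfolding Inv_def using eps_pos[of 0] by simp
      thus ?thesis by force
    qed
    have step: "\<exists>s'. (Inv (Suc m) s' \<and> (Suc m = 0 \<longrightarrow> fst s' = 0)) \<and> R m s s'" if "Inv m s \<and> (m = 0 \<longrightarrow> fst s = 0)" for m s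
    proof -
      obtain N y w where s: "s = (N, y, w)" by (cases s) auto
      have yX: "y \<in> X" and wX: "w \<in> X" and yx: "\<forall>j. dist ((F^^j) y) (x (N+j)) < gam m"
        and wy_lim: "(\<lambda>j. dist ((F^^(N+j)) w) ((F^^j) y)) \<longlonglongrightarrow> 0"
        using that s unfolding Inv_def by auto
      have "\<exists>K. \<forall>k\<ge>K. \<bar>dist (F (x k)) (x (Suc k))\<bar> < dS (Suc m)"
        using xl dS(1) unfolding lim0_seq by blast
      then obtain M1 where M1: "\<forall>k\<ge>M1. dist (F (x k)) (x (Suc k)) < dS (Suc m)" by auto
      have "\<exists>K. \<forall>k\<ge>K. \<bar>dist ((F^^(N+k)) w) ((F^^k) y)\<bar> < gam m"
        using wy_lim gam_pos unfolding lim0_seq by blast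
      then obtain M2 where M2: "\<forall>j\<ge>M2. dist ((F^^(N+j)) w) ((F^^j) y) < gam m" by auto
      define N' where "N' = N + (M1 + M2 + 1)"
      have "\<forall>k. dist (F (x (N'+k))) (x (N' + Suc k)) < dS (Suc m)"
      proof
        fix k
        have "M1 \<le> N'+k" unfolding N'_def by simp
        then show "dist (F (x (N'+k))) (x (N' + Suc k)) < dS (Suc m)" using M1 by simp
      qed
      then have "\<exists>y'\<in>X. \<forall>k. dist ((F^^k) y') (x (N'+k)) < gam (Suc m)"
        using dS(2)[of "\<lambda>k. x (N'+k)" "Suc m"] xX by simp
      then obtain y' where y'X: "y' \<in> X" and y'x: "\<forall>k. dist ((F^^k) y') (x (N'+k)) < gam (Suc m)" by blast
      let ?b = "(F^^N') w"
      have d1: "dist y' (x N') < gam (Suc m)" using y'x[rule_format, of 0] by simp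
      have d2: "dist (x N') ((F^^(M1+M2+1)) y) < gam m" using yx[rule_format, of "M1+M2+1"] N'_def
        by (simp add: dist_commute)
      have d3: "dist ((F^^(M1+M2+1)) y) ?b < gam m" using M2[rule_format, of "M1+M2+1"] N'_def
        by (simp add: dist_commute)
      have "dist y' ?b \<le> dist y' (x N') + dist (x N') ((F^^(M1+M2+1)) y) + dist ((F^^(M1+M2+1)) y) ?b"
        by (meson add_mono dist_triangle order_trans order_refl)
      then have "dist y' ?b < dV (Suc m)" using d1 d2 d3 gam_dV1[of m] gam_dV2[of m] by linarith
      then obtain v where vX: "v \<in> X" and v1: "\<forall>n. dist ((F^^n) y') ((F^^n) v) \<le> eps (Suc m)"
        and v2: "(\<lambda>n. dist ((F^^n) y') ((F^^n) v)) \<longlonglongrightarrow> 0" and v3: "\<forall>n. dist ((G^^n) ?b) ((G^^n) v) \<le> eps (Suc m)"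
        using dV(2)[OF y'X FnX[OF wX]] by blast
      define w' where "w' = (G^^N') v"
      have w'X: "w' \<in> X" using GnX vX w'_def by simp
      have shift: "(F^^(N'+j)) w' = (F^^j) v" for j
      proof -
        have "(F^^(N'+j)) = (F^^j) \<circ> (F^^N')" by (metis add.commute funpow_add)
        then have "(F^^(N'+j)) w' = (F^^j) ((F^^N') ((G^^N') v))" by (simp add: w'_def)
        also have "\<dots> = (F^^j) v" using Fn_Gn vX by simp
        finally show ?thesis .
      qed
      have "Inv (Suc m) (N', y', w')" unfolding Inv_def using y'X w'X y'x v1 v2
        by (simp add: shift dist_commute)
      moreover have "R m s (N', y', w')"
        unfolding R_def s
      proof (simp, intro conjI allI impI)
        show "N < N'" using N'_def by simp
        fix k assume k: "k \<le> N'"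
        have "(G^^N') = (G^^k) \<circ> (G^^(N'-k))" using k by (metis funpow_add le_add_diff_inverse)
        then have "(F^^k) w' = (F^^k) ((G^^k) ((G^^(N'-k)) v))" by (simp add: w'_def)
        also have "\<dots> = (G^^(N'-k)) v" using Fn_Gn GnX vX by simp
        finally have e1: "(F^^k) w' = (G^^(N'-k)) v" .
        have e2: "(F^^k) w = (G^^(N'-k)) ?b" using Gn_Fn[OF wX, of "N'-k" N'] k by simp
        show "dist ((F^^k) w') ((F^^k) w) \<le> eps (Suc m)"
          using v3 e1 e2 by (simp add: dist_commute)
      qed
      ultimately show ?thesis by blast
    qed
    obtain st where st0: "\<forall>m. (Inv m (st m) \<and> (m = 0 \<longrightarrow> fst (st m) = 0)) \<and> R m (st m) (st (Suc m))"
      using dependent_nat_choice[of "\<lambda>m s. Inv m s \<and> (m = 0 \<longrightarrow> fst s = 0)" R] init step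
      by blast
    define N where "N m = fst (st m)" for m
    define y where "y m = fst (snd (st m))" for m
    define w where "w m = snd (snd (st m))" for m
    have stm: "st m = (N m, y m, w m)" for m by (simp add: N_def y_def w_def)
    have I: "Inv m (N m, y m, w m)" for m using st0 stm by metis
    have wX: "w m \<in> X" for m using I[of m] unfolding Inv_def by simp
    have Rm: "k \<le> N (Suc m) \<Longrightarrow> dist ((F^^k) (w (Suc m))) ((F^^k) (w m)) \<le> eps (Suc m)" for m k
      using st0 unfolding R_def N_def w_def by auto
    have N0: "N 0 = 0" using st0 N_def by simp
    have base: "dist ((F^^k) (w m)) (x k) \<le> 2 * eps m" if k: "N m \<le> k" for k m
    proof -
      define j where "j = k - N m"
      have kk: "k = N m + j" using k j_def by simp
      from I[of m] have a: "dist ((F^^(N m + j)) (w m)) ((F^^j) (y m)) \<le> eps m"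
        and b: "dist ((F^^j) (y m)) (x (N m + j)) < gam m" unfolding Inv_def by auto
      show ?thesis using dist_triangle[of "(F^^k) (w m)" "x k" "(F^^j) (y m)"] a b gam_le[of m] kk by simp
    qed
    have chain: "\<forall>k \<ge> N m. dist ((F^^k) (w (m+d))) (x k) \<le> 3 * eps m - eps (m+d)" for m d
    proof (induction d)
      case 0 then show ?case using base by simp
    next
      case (Suc d)
      show ?case
      proof (intro allI impI)
        fix k assume k: "N m \<le> k"
        show "dist ((F^^k) (w (m + Suc d))) (x k) \<le> 3 * eps m - eps (m + Suc d)"
        proof (cases "k \<le> N (Suc (m+d))")
          case True
          have "dist ((F^^k) (w (Suc (m+d)))) (x k) \<le> dist ((F^^k) (w (Suc (m+d)))) ((F^^k) (w (m+d))) + dist ((F^^k) (w (m+d))) (x k)"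
            by (rule dist_triangle)
          then show ?thesis using Rm[OF True] Suc.IH[rule_format, OF k] eps_Suc[of "m+d"] by simp
        next
          case False
          then have "dist ((F^^k) (w (Suc (m+d)))) (x k) \<le> 2 * eps (Suc (m+d))" using base by simp
          moreover have "eps (Suc (m+d)) \<le> eps m" using eps_mono by simp
          ultimately show ?thesis by simp
        qed
      qed
    qed
    have chain': "dist ((F^^k) (w m')) (x k) \<le> 3 * eps m" if "m \<le> m'" "N m \<le> k" for m m' k
    proof -
      have "dist ((F^^k) (w m')) (x k) \<le> 3 * eps m - eps m'" using chain[of m "m'-m"] that by simp
      then show ?thesis using eps_pos[of m'] by linarith
    qed
    obtain z r where zX: "z \<in> X" and r: "strict_mono r" and lim: "(w \<circ> r) \<longlonglongrightarrow> z"
      using compact_imp_seq_compact[OF cpt] wX unfolding seq_compact_def by metis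
    have zb: "dist ((F^^k) z) (x k) \<le> 3 * eps m" if "N m \<le> k" for k m
    proof -
      have "(\<lambda>n. (F^^k) ((w \<circ> r) n)) \<longlonglongrightarrow> (F^^k) z"
        using continuous_on_tendsto_compose[OF contFn lim zX] wX by simp
      hence "(\<lambda>n. dist ((F^^k) ((w \<circ> r) n)) (x k)) \<longlonglongrightarrow> dist ((F^^k) z) (x k)"
        by (intro tendsto_intros)
      moreover have "\<forall>n\<ge>m. dist ((F^^k) ((w \<circ> r) n)) (x k) \<le> 3 * eps m"
      proof (intro allI impI)
        fix n assume "m \<le> n"
        then have "m \<le> r n" using seq_suble[OF r, of n] by linarith
        then show "dist ((F^^k) ((w \<circ> r) n)) (x k) \<le> 3 * eps m" using chain' that by simp
      qed
      ultimately show ?thesis by (intro LIMSEQ_le_const2) auto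
    qed
    show "\<exists>z\<in>X. (\<forall>k. dist ((F^^k) z) (x k) \<le> \<eta>) \<and> ((\<lambda>k. dist ((F^^k) z) (x k)) \<longlonglongrightarrow> 0)"
    proof (intro bexI[OF _ zX] conjI allI)
      fix k show "dist ((F^^k) z) (x k) \<le> \<eta>" using zb[of 0 k] N0 eta by (simp add: eps_def)
    next
      show "(\<lambda>k. dist ((F^^k) z) (x k)) \<longlonglongrightarrow> 0" unfolding lim0_seq
      proof (intro allI impI)
        fix e :: real assume e: "e > 0"
        have eq: "3 * eps m = 3 * (\<eta>/4) * (1/2::real)^m" for m
          by (simp add: eps_def power_add power_one_over field_simps)
        have "(\<lambda>m. 3 * (\<eta>/4) * (1/2::real)^m) \<longlonglongrightarrow> 0"
          by (intro tendsto_mult_right_zero LIMSEQ_power_zero) auto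
        then have "(\<lambda>m. 3 * eps m) \<longlonglongrightarrow> 0" by (simp only: eq)
        then obtain K where "\<forall>k\<ge>K. \<bar>3 * eps k\<bar> < e" using e unfolding lim0_seq by blast
        then have "\<bar>3 * eps K\<bar> < e" by blast
        then obtain m where m: "3 * eps m < e" by (meson abs_less_iff)
        show "\<exists>K. \<forall>k\<ge>K. \<bar>dist ((F^^k) z) (x k)\<bar> < e"
          using zb m by (intro exI[of _ "N m"]) (auto intro: le_less_trans)
      qed
    qed
  qed
qed

end


context hsys begin

lemma iter_pos: "iter_int F G (int n) = F^^n" by (simp add: iter_int_def)
lemma iter_neg: "iter_int F G (- int n) = G^^n" unfolding iter_int_def by (cases "n = 0") auto
lemma iterX: "x \<in> X \<Longrightarrow> iter_int F G k x \<in> X" by (simp add: iter_int_def FnX GnX)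
lemma contIter: "continuous_on X (iter_int F G k)"
  unfolding iter_int_def using contFn hsys.contFn[OF sym] by simp

lemma ext_err:
  fixes N :: nat
  assumes xX: "\<forall>k. x k \<in> X"
  defines "xe \<equiv> \<lambda>k. if k > int N then (F^^nat(k - int N)) (x (int N)) else if k < - int N then (G^^nat(- int N - k)) (x (- int N)) else x k"
  shows "xe k \<in> X" and "dist (F (xe k)) (xe (k+1)) = (if - int N \<le> k \<and> k < int N then dist (F (x k)) (x (k+1)) else 0)"
proof -
  show "xe k \<in> X" unfolding xe_def using xX FnX GnX by simp
  consider (a) "k \<ge> int N" | (b) "- int N \<le> k \<and> k < int N" | (c) "k < - int N" by linarith
  then show "dist (F (xe k)) (xe (k+1)) = (if - int N \<le> k \<and> k < int N then dist (F (x k)) (x (k+1)) else 0)"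
  proof cases
    case a
    have e1: "xe k = (F^^nat(k - int N)) (x (int N))" using a by (cases "k = int N") (auto simp: xe_def)
    have n: "nat (k + 1 - int N) = Suc (nat (k - int N))" using a by linarith
    have e2: "xe (k+1) = (F^^Suc (nat(k - int N))) (x (int N))" using a n by (simp add: xe_def)
    show ?thesis using a e1 e2 by simp
  next
    case b
    then show ?thesis by (simp add: xe_def)
  next
    case c
    have n: "nat (- int N - k) = Suc (nat (- int N - (k+1)))" using c by linarith
    have e1: "xe k = (G^^Suc (nat (- int N - (k+1)))) (x (- int N))" using c n by (simp add: xe_def)
    have e2: "xe (k+1) = (G^^nat (- int N - (k+1))) (x (- int N))" using c
      by (cases "k + 1 = - int N") (auto simp: xe_def)
    have "F (xe k) = xe (k+1)" using e1 e2 FG GnX xX by simp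
    then show ?thesis using c by simp
  qed
qed

lemma L_imp_shadowing: assumes L: "L_shadowing X F G" shows "shadowing X F G"
  unfolding shadowing_def
proof (intro allI impI)
  fix \<epsilon> :: real assume \<epsilon>: "\<epsilon> > 0"
  obtain \<delta> where \<delta>: "\<delta> > 0" and L\<delta>: "\<forall>x::int \<Rightarrow> 'a. (\<forall>k. x k \<in> X) \<longrightarrow>
        (\<forall>k. dist (F (x k)) (x (k+1)) \<le> \<delta>) \<longrightarrow>
        ((\<lambda>k. dist (F (x k)) (x (k+1))) \<longlongrightarrow> 0) at_top \<longrightarrow>
        ((\<lambda>k. dist (F (x k)) (x (k+1))) \<longlongrightarrow> 0) at_bot \<longrightarrow>
        (\<exists>z\<in>X. (\<forall>k. dist (iter_int F G k z) (x k) \<le> \<epsilon>/2) \<and>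
               ((\<lambda>k. dist (iter_int F G k z) (x k)) \<longlongrightarrow> 0) at_top \<and>
               ((\<lambda>k. dist (iter_int F G k z) (x k)) \<longlongrightarrow> 0) at_bot)"
    using L[unfolded L_shadowing_def, THEN spec, of "\<epsilon>/2"] \<epsilon> by auto
  show "\<exists>\<delta>>0. \<forall>x::int \<Rightarrow> 'a. (\<forall>k. x k \<in> X) \<longrightarrow>
        (\<forall>k. dist (F (x k)) (x (k+1)) < \<delta>) \<longrightarrow>
        (\<exists>y\<in>X. \<forall>k. dist (iter_int F G k y) (x k) < \<epsilon>)"
  proof (intro exI[of _ \<delta>] conjI allI impI)
    show "\<delta> > 0" by (rule \<delta>)
    fix x :: "int \<Rightarrow> 'a" assume xX: "\<forall>k. x k \<in> X" and xd: "\<forall>k. dist (F (x k)) (x (k+1)) < \<delta>"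
    define xe where "xe N k = (if k > int N then (F^^nat(k - int N)) (x (int N)) else if k < - int N then (G^^nat(- int N - k)) (x (- int N)) else x k)" for N :: nat and k
    have xeX: "xe N k \<in> X" for N k unfolding xe_def using ext_err(1)[OF xX] by simp
    have xe_err: "dist (F (xe N k)) (xe N (k+1)) = (if - int N \<le> k \<and> k < int N then dist (F (x k)) (x (k+1)) else 0)" for N k
      unfolding xe_def using ext_err(2)[OF xX] by simp
    have "\<exists>z. z \<in> X \<and> (\<forall>k. dist (iter_int F G k z) (xe N k) \<le> \<epsilon>/2)" for N
    proof -
      have e1: "\<forall>k. dist (F (xe N k)) (xe N (k+1)) \<le> \<delta>" using xe_err xd \<delta> by (simp add: less_imp_le)
      have e2: "((\<lambda>k. dist (F (xe N k)) (xe N (k+1))) \<longlongrightarrow> 0) at_top"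
        by (rule tendsto_eventually) (auto simp: eventually_at_top_linorder xe_err intro!: exI[of _ "int N"])
      have e3: "((\<lambda>k. dist (F (xe N k)) (xe N (k+1))) \<longlongrightarrow> 0) at_bot"
        by (rule tendsto_eventually) (auto simp: eventually_at_bot_linorder xe_err intro!: exI[of _ "- int N - 1"])
      show ?thesis using L\<delta>[rule_format, of "xe N", OF xeX e1[rule_format] e2 e3] by blast
    qed
    then have "\<forall>N. \<exists>z. z \<in> X \<and> (\<forall>k. dist (iter_int F G k z) (xe N k) \<le> \<epsilon>/2)" by blast
    then have "\<exists>zs. \<forall>N. zs N \<in> X \<and> (\<forall>k. dist (iter_int F G k (zs N)) (xe N k) \<le> \<epsilon>/2)"
      by (rule choice)
    then obtain zs where zsX: "\<And>N. zs N \<in> X" and zs: "\<And>N k. dist (iter_int F G k (zs N)) (xe N k) \<le> \<epsilon>/2"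
      by blast
    obtain z r where zX: "z \<in> X" and r: "strict_mono r" and lim: "(zs \<circ> r) \<longlonglongrightarrow> z"
      using compact_imp_seq_compact[OF cpt] zsX unfolding seq_compact_def by metis
    show "\<exists>y\<in>X. \<forall>k. dist (iter_int F G k y) (x k) < \<epsilon>"
    proof (intro bexI[OF _ zX] allI)
      fix k
      have "(\<lambda>n. iter_int F G k ((zs \<circ> r) n)) \<longlonglongrightarrow> iter_int F G k z"
        using continuous_on_tendsto_compose[OF contIter lim zX] zsX by simp
      hence "(\<lambda>n. dist (iter_int F G k ((zs \<circ> r) n)) (x k)) \<longlonglongrightarrow> dist (iter_int F G k z) (x k)"
        by (intro tendsto_intros)
      moreover have "\<forall>n\<ge>nat \<bar>k\<bar>. dist (iter_int F G k ((zs \<circ> r) n)) (x k) \<le> \<epsilon>/2"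
      proof (intro allI impI)
        fix n assume "nat \<bar>k\<bar> \<le> n"
        then have "nat \<bar>k\<bar> \<le> r n" using seq_suble[OF r, of n] by linarith
        then have "xe (r n) k = x k" unfolding xe_def by auto
        then show "dist (iter_int F G k ((zs \<circ> r) n)) (x k) \<le> \<epsilon>/2" by (metis zs o_apply)
      qed
      ultimately have "dist (iter_int F G k z) (x k) \<le> \<epsilon>/2" by (intro LIMSEQ_le_const2) auto
      then show "dist (iter_int F G k z) (x k) < \<epsilon>" using \<epsilon> by linarith
    qed
  qed
qed

end


context hsys begin

lemma L_imp_V: assumes L: "L_shadowing X F G"
  shows "\<forall>\<epsilon>>0. \<exists>\<delta>>0. \<forall>x\<in>X. \<forall>y\<in>X. dist x y < \<delta> \<longrightarrow> Vs X F \<epsilon> x \<inter> Vu X G \<epsilon> y \<noteq> {}"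
proof (intro allI impI)
  fix \<epsilon> :: real assume \<epsilon>: "\<epsilon> > 0"
  obtain \<delta>L where \<delta>L: "\<delta>L > 0" and L\<delta>: "\<forall>x::int \<Rightarrow> 'a. (\<forall>k. x k \<in> X) \<longrightarrow>
        (\<forall>k. dist (F (x k)) (x (k+1)) \<le> \<delta>L) \<longrightarrow>
        ((\<lambda>k. dist (F (x k)) (x (k+1))) \<longlongrightarrow> 0) at_top \<longrightarrow>
        ((\<lambda>k. dist (F (x k)) (x (k+1))) \<longlongrightarrow> 0) at_bot \<longrightarrow>
        (\<exists>z\<in>X. (\<forall>k. dist (iter_int F G k z) (x k) \<le> \<epsilon>/2) \<and>
               ((\<lambda>k. dist (iter_int F G k z) (x k)) \<longlongrightarrow> 0) at_top \<and>
               ((\<lambda>k. dist (iter_int F G k z) (x k)) \<longlongrightarrow> 0) at_bot)"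
    using L[unfolded L_shadowing_def, THEN spec, of "\<epsilon>/2"] \<epsilon> by auto
  obtain \<sigma> where \<sigma>: "\<sigma> > 0" and h\<sigma>: "\<forall>a\<in>X. \<forall>b\<in>X. dist a b < \<sigma> \<longrightarrow> dist (F a) (F b) < \<delta>L"
    using ucF[OF \<delta>L] by blast
  show "\<exists>\<delta>>0. \<forall>x\<in>X. \<forall>y\<in>X. dist x y < \<delta> \<longrightarrow> Vs X F \<epsilon> x \<inter> Vu X G \<epsilon> y \<noteq> {}"
  proof (intro exI[of _ "min \<sigma> (\<epsilon>/2)"] conjI ballI impI)
    show "min \<sigma> (\<epsilon>/2) > 0" using \<sigma> \<epsilon> by simp
    fix x y assume xX: "x \<in> X" and yX: "y \<in> X" and dxy: "dist x y < min \<sigma> (\<epsilon>/2)"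
    define s where "s k = (if k \<le> 0 then (G^^nat(-k)) y else (F^^nat k) x)" for k :: int
    have sX: "\<forall>k. s k \<in> X" unfolding s_def using xX yX FnX GnX by simp
    have s_err: "dist (F (s k)) (s (k+1)) = (if k = 0 then dist (F y) (F x) else 0)" for k
    proof -
      consider (a) "k < 0" | (b) "k = 0" | (c) "k > 0" by linarith
      then show ?thesis
      proof cases
        case a
        have n: "nat (-k) = Suc (nat (-(k+1)))" using a by linarith
        have e1: "s k = (G^^Suc (nat (-(k+1)))) y" using a n by (simp add: s_def)
        have e2: "s (k+1) = (G^^nat (-(k+1))) y" using a by (simp add: s_def)
        have "F (s k) = s (k+1)" using e1 e2 FG GnX yX by simp
        then show ?thesis using a by simp
      next
        case b then show ?thesis by (simp add: s_def)
      next
        case c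
        have n: "nat (k+1) = Suc (nat k)" using c by linarith
        then show ?thesis using c by (simp add: s_def)
      qed
    qed
    have e1: "\<forall>k. dist (F (s k)) (s (k+1)) \<le> \<delta>L"
    proof
      fix k
      have "dist (F y) (F x) < \<delta>L" using h\<sigma> xX yX dxy by (simp add: dist_commute)
      then show "dist (F (s k)) (s (k+1)) \<le> \<delta>L" using s_err[of k] \<delta>L by simp
    qed
    have e2: "((\<lambda>k. dist (F (s k)) (s (k+1))) \<longlongrightarrow> 0) at_top"
      by (rule tendsto_eventually) (unfold eventually_at_top_linorder, rule exI[of _ "1::int"], simp add: s_err)
    have e3: "((\<lambda>k. dist (F (s k)) (s (k+1))) \<longlongrightarrow> 0) at_bot"
      by (rule tendsto_eventually) (unfold eventually_at_bot_linorder, rule exI[of _ "-1::int"], simp add: s_err)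
    obtain z where zX: "z \<in> X" and z1: "\<forall>k. dist (iter_int F G k z) (s k) \<le> \<epsilon>/2"
      and z2: "((\<lambda>k. dist (iter_int F G k z) (s k)) \<longlongrightarrow> 0) at_top"
      and z3: "((\<lambda>k. dist (iter_int F G k z) (s k)) \<longlongrightarrow> 0) at_bot"
      using L\<delta>[rule_format, of s, OF sX[rule_format] e1[rule_format] e2 e3] by blast
    have sp: "s (int n) = (F^^n) x" if "n > 0" for n using that by (simp add: s_def)
    have sm: "s (- int n) = (G^^n) y" for n by (simp add: s_def)
    have "z \<in> Vs X F \<epsilon> x"
      unfolding Vs_def Ws_def Ws_loc_def
    proof (simp add: zX, intro conjI allI)
      show "(\<lambda>n. dist ((F^^n) x) ((F^^n) z)) \<longlonglongrightarrow> 0" unfolding lim0_seq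
      proof (intro allI impI)
        fix e :: real assume "e > 0"
        then obtain K where K: "\<forall>k\<ge>K. \<bar>dist (iter_int F G k z) (s k)\<bar> < e" using z2 unfolding lim0_top by blast
        show "\<exists>K. \<forall>k\<ge>K. \<bar>dist ((F^^k) x) ((F^^k) z)\<bar> < e"
        proof (intro exI[of _ "max 1 (nat K)"] allI impI)
          fix n assume n: "max 1 (nat K) \<le> n"
          then have "int n \<ge> K" "n > 0" by auto
          then show "\<bar>dist ((F^^n) x) ((F^^n) z)\<bar> < e" using K[rule_format, of "int n"] sp[of n] iter_pos
            by (simp add: dist_commute)
        qed
      qed
    next
      fix n
      show "dist ((F^^n) x) ((F^^n) z) \<le> \<epsilon>"
      proof (cases "n = 0")
        case True
        have "dist y z \<le> \<epsilon>/2" using z1[rule_format, of 0] by (simp add: s_def iter_int_def dist_commute)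
        moreover have "dist x z \<le> dist x y + dist y z" by (rule dist_triangle)
        ultimately show ?thesis using True dxy by simp
      next
        case False
        then show ?thesis using z1[rule_format, of "int n"] sp[of n] iter_pos \<epsilon> by (simp add: dist_commute)
      qed
    qed
    moreover have "z \<in> Vu X G \<epsilon> y"
      unfolding Vu_def Wu_def Wu_loc_def
    proof (simp add: zX, intro conjI allI)
      show "(\<lambda>n. dist ((G^^n) y) ((G^^n) z)) \<longlonglongrightarrow> 0" unfolding lim0_seq
      proof (intro allI impI)
        fix e :: real assume "e > 0"
        then obtain K where K: "\<forall>k\<le>K. \<bar>dist (iter_int F G k z) (s k)\<bar> < e" using z3 unfolding lim0_bot by blast
        show "\<exists>K'. \<forall>k\<ge>K'. \<bar>dist ((G^^k) y) ((G^^k) z)\<bar> < e"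
        proof (intro exI[of _ "nat (-K)"] allI impI)
          fix n assume n: "nat (-K) \<le> n"
          then have "- int n \<le> K" by auto
          then show "\<bar>dist ((G^^n) y) ((G^^n) z)\<bar> < e" using K[rule_format, of "- int n"] sm[of n] iter_neg
            by (simp add: dist_commute)
        qed
      qed
    next
      fix n
      show "dist ((G^^n) y) ((G^^n) z) \<le> \<epsilon>"
        using z1[rule_format, of "- int n"] sm[of n] iter_neg \<epsilon> by (simp add: dist_commute)
    qed
    ultimately show "Vs X F \<epsilon> x \<inter> Vu X G \<epsilon> y \<noteq> {}" by blast
  qed
qed

lemma shad_PF: assumes sh: "shadowing X F G"
  shows "\<forall>\<gamma>>0. \<exists>\<delta>>0. \<forall>x::nat\<Rightarrow>'a. (\<forall>k. x k \<in> X) \<longrightarrow> (\<forall>k. dist (F (x k)) (x (Suc k)) < \<delta>) \<longrightarrow> (\<exists>y\<in>X. \<forall>k. dist ((F^^k) y) (x k) < \<gamma>)"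
proof (intro allI impI)
  fix \<gamma> :: real assume "\<gamma> > 0"
  then obtain \<delta> where \<delta>: "\<delta> > 0" and h: "\<forall>x::int \<Rightarrow> 'a. (\<forall>k. x k \<in> X) \<longrightarrow>
        (\<forall>k. dist (F (x k)) (x (k+1)) < \<delta>) \<longrightarrow>
        (\<exists>y\<in>X. \<forall>k. dist (iter_int F G k y) (x k) < \<gamma>)"
    using sh[unfolded shadowing_def, THEN spec, of \<gamma>] by auto
  show "\<exists>\<delta>>0. \<forall>x::nat\<Rightarrow>'a. (\<forall>k. x k \<in> X) \<longrightarrow> (\<forall>k. dist (F (x k)) (x (Suc k)) < \<delta>) \<longrightarrow> (\<exists>y\<in>X. \<forall>k. dist ((F^^k) y) (x k) < \<gamma>)"
  proof (intro exI[of _ \<delta>] conjI allI impI)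
    show "\<delta> > 0" by (rule \<delta>)
    fix x :: "nat \<Rightarrow> 'a" assume xX: "\<forall>k. x k \<in> X" and xd: "\<forall>k. dist (F (x k)) (x (Suc k)) < \<delta>"
    define x' where "x' k = (if k \<ge> 0 then x (nat k) else (G^^nat(-k)) (x 0))" for k :: int
    have x'X: "\<forall>k. x' k \<in> X" unfolding x'_def using xX GnX by simp
    have x'd: "\<forall>k. dist (F (x' k)) (x' (k+1)) < \<delta>"
    proof
      fix k :: int
      show "dist (F (x' k)) (x' (k+1)) < \<delta>"
      proof (cases "k \<ge> 0")
        case True
        have "nat (k+1) = Suc (nat k)" using True by linarith
        then show ?thesis using True xd by (simp add: x'_def)
      next
        case False
        have n: "nat (-k) = Suc (nat (-(k+1)))" using False by linarith
        have e1: "x' k = (G^^Suc (nat (-(k+1)))) (x 0)" using False n by (simp add: x'_def)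
        have e2: "x' (k+1) = (G^^nat (-(k+1))) (x 0)" using False
          by (cases "k + 1 = 0") (auto simp: x'_def)
        have "F (x' k) = x' (k+1)" using e1 e2 FG GnX xX by simp
        then show ?thesis using \<delta> by simp
      qed
    qed
    obtain y where yX: "y \<in> X" and hy: "\<forall>k. dist (iter_int F G k y) (x' k) < \<gamma>"
      using h[rule_format, of x', OF x'X[rule_format] x'd[rule_format]] by blast
    show "\<exists>y\<in>X. \<forall>k. dist ((F^^k) y) (x k) < \<gamma>"
    proof (intro bexI[OF _ yX] allI)
      fix k show "dist ((F^^k) y) (x k) < \<gamma>" using hy[rule_format, of "int k"] iter_pos by (simp add: x'_def)
    qed
  qed
qed

lemma shad_PG: assumes sh: "shadowing X F G"
  shows "\<forall>\<gamma>>0. \<exists>\<delta>>0. \<forall>x::nat\<Rightarrow>'a. (\<forall>k. x k \<in> X) \<longrightarrow> (\<forall>k. dist (G (x k)) (x (Suc k)) < \<delta>) \<longrightarrow> (\<exists>y\<in>X. \<forall>k. dist ((G^^k) y) (x k) < \<gamma>)"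
proof (intro allI impI)
  fix \<gamma> :: real assume "\<gamma> > 0"
  then obtain \<delta> where \<delta>: "\<delta> > 0" and h: "\<forall>x::int \<Rightarrow> 'a. (\<forall>k. x k \<in> X) \<longrightarrow>
        (\<forall>k. dist (F (x k)) (x (k+1)) < \<delta>) \<longrightarrow>
        (\<exists>y\<in>X. \<forall>k. dist (iter_int F G k y) (x k) < \<gamma>)"
    using sh[unfolded shadowing_def, THEN spec, of \<gamma>] by auto
  obtain \<sigma> where \<sigma>: "\<sigma> > 0" and h\<sigma>: "\<forall>a\<in>X. \<forall>b\<in>X. dist a b < \<sigma> \<longrightarrow> dist (F a) (F b) < \<delta>"
    using ucF[OF \<delta>] by blast
  show "\<exists>\<delta>>0. \<forall>x::nat\<Rightarrow>'a. (\<forall>k. x k \<in> X) \<longrightarrow> (\<forall>k. dist (G (x k)) (x (Suc k)) < \<delta>) \<longrightarrow> (\<exists>y\<in>X. \<forall>k. dist ((G^^k) y) (x k) < \<gamma>)"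
  proof (intro exI[of _ \<sigma>] conjI allI impI)
    show "\<sigma> > 0" by (rule \<sigma>)
    fix u :: "nat \<Rightarrow> 'a" assume uX: "\<forall>k. u k \<in> X" and ud: "\<forall>k. dist (G (u k)) (u (Suc k)) < \<sigma>"
    define x' where "x' k = (if k \<le> 0 then u (nat (-k)) else (F^^nat k) (u 0))" for k :: int
    have x'X: "\<forall>k. x' k \<in> X" unfolding x'_def using uX FnX by simp
    have x'd: "\<forall>k. dist (F (x' k)) (x' (k+1)) < \<delta>"
    proof
      fix k :: int
      show "dist (F (x' k)) (x' (k+1)) < \<delta>"
      proof (cases "k \<ge> 0")
        case True
        have n: "nat (k+1) = Suc (nat k)" using True by linarith
        have e1: "x' k = (F^^nat k) (u 0)" using True by (cases "k = 0") (auto simp: x'_def)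
        have e2: "x' (k+1) = (F^^Suc (nat k)) (u 0)" using True n by (simp add: x'_def)
        show ?thesis using e1 e2 \<delta> by simp
      next
        case False
        define m where "m = nat (-(k+1))"
        have "nat (-k) = Suc m" using False unfolding m_def by linarith
        then have e1: "x' k = u (Suc m)" using False unfolding x'_def by simp
        have e2: "x' (k+1) = u m" using False unfolding m_def x'_def by simp
        have "dist (u (Suc m)) (G (u m)) < \<sigma>" using ud by (simp add: dist_commute)
        then have "dist (F (u (Suc m))) (F (G (u m))) < \<delta>" using h\<sigma> uX GX by blast
        then show ?thesis using e1 e2 FG uX by simp
      qed
    qed
    obtain y where yX: "y \<in> X" and hy: "\<forall>k. dist (iter_int F G k y) (x' k) < \<gamma>"
      using h[rule_format, of x', OF x'X[rule_format] x'd[rule_format]] by blast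
    show "\<exists>y\<in>X. \<forall>k. dist ((G^^k) y) (u k) < \<gamma>"
    proof (intro bexI[OF _ yX] allI)
      fix k show "dist ((G^^k) y) (u k) < \<gamma>" using hy[rule_format, of "- int k"] iter_neg by (simp add: x'_def)
    qed
  qed
qed

end


context hsys begin

lemma SV_imp_L: assumes sh: "shadowing X F G"
  and V: "\<forall>\<epsilon>>0. \<exists>\<delta>>0. \<forall>x\<in>X. \<forall>y\<in>X. dist x y < \<delta> \<longrightarrow> Vs X F \<epsilon> x \<inter> Vu X G \<epsilon> y \<noteq> {}"
  shows "L_shadowing X F G"
proof -
  interpret B: hsys X G F by (rule sym)
  have Vfull: "\<forall>\<epsilon>>0. \<exists>\<delta>>0. \<forall>a\<in>X. \<forall>b\<in>X. dist a b < \<delta> \<longrightarrow> (\<exists>v\<in>X. (\<forall>n. dist ((F^^n) a) ((F^^n) v) \<le> \<epsilon>) \<and> ((\<lambda>n. dist ((F^^n) a) ((F^^n) v)) \<longlonglongrightarrow> 0) \<and> (\<forall>n. dist ((G^^n) b) ((G^^n) v) \<le> \<epsilon>) \<and> ((\<lambda>n. dist ((G^^n) b) ((G^^n) v)) \<longlonglongrightarrow> 0))"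
  proof (intro allI impI)
    fix \<epsilon> :: real assume "\<epsilon> > 0"
    then obtain \<delta> where \<delta>: "\<delta> > 0" and h: "\<forall>x\<in>X. \<forall>y\<in>X. dist x y < \<delta> \<longrightarrow> Vs X F \<epsilon> x \<inter> Vu X G \<epsilon> y \<noteq> {}"
      using V by blast
    show "\<exists>\<delta>>0. \<forall>a\<in>X. \<forall>b\<in>X. dist a b < \<delta> \<longrightarrow> (\<exists>v\<in>X. (\<forall>n. dist ((F^^n) a) ((F^^n) v) \<le> \<epsilon>) \<and> ((\<lambda>n. dist ((F^^n) a) ((F^^n) v)) \<longlonglongrightarrow> 0) \<and> (\<forall>n. dist ((G^^n) b) ((G^^n) v) \<le> \<epsilon>) \<and> ((\<lambda>n. dist ((G^^n) b) ((G^^n) v)) \<longlonglongrightarrow> 0))"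
    proof (intro exI[of _ \<delta>] conjI ballI impI)
      show "\<delta> > 0" by (rule \<delta>)
      fix a b assume "a \<in> X" "b \<in> X" "dist a b < \<delta>"
      then obtain v where "v \<in> Vs X F \<epsilon> a \<inter> Vu X G \<epsilon> b" using h by blast
      then show "\<exists>v\<in>X. (\<forall>n. dist ((F^^n) a) ((F^^n) v) \<le> \<epsilon>) \<and> ((\<lambda>n. dist ((F^^n) a) ((F^^n) v)) \<longlonglongrightarrow> 0) \<and> (\<forall>n. dist ((G^^n) b) ((G^^n) v) \<le> \<epsilon>) \<and> ((\<lambda>n. dist ((G^^n) b) ((G^^n) v)) \<longlonglongrightarrow> 0)"
        unfolding Vs_def Vu_def Ws_def Wu_def Ws_loc_def Wu_loc_def by blast
    qed
  qed
  have QF: "\<forall>\<epsilon>>0. \<exists>\<delta>>0. \<forall>a\<in>X. \<forall>b\<in>X. dist a b < \<delta> \<longrightarrow> (\<exists>v\<in>X. (\<forall>n. dist ((F^^n) a) ((F^^n) v) \<le> \<epsilon>) \<and> ((\<lambda>n. dist ((F^^n) a) ((F^^n) v)) \<longlonglongrightarrow> 0) \<and> (\<forall>n. dist ((G^^n) b) ((G^^n) v) \<le> \<epsilon>))"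
  proof (intro allI impI)
    fix \<epsilon> :: real assume "\<epsilon> > 0"
    then obtain \<delta> where "\<delta> > 0" and h: "\<forall>a\<in>X. \<forall>b\<in>X. dist a b < \<delta> \<longrightarrow> (\<exists>v\<in>X. (\<forall>n. dist ((F^^n) a) ((F^^n) v) \<le> \<epsilon>) \<and> ((\<lambda>n. dist ((F^^n) a) ((F^^n) v)) \<longlonglongrightarrow> 0) \<and> (\<forall>n. dist ((G^^n) b) ((G^^n) v) \<le> \<epsilon>) \<and> ((\<lambda>n. dist ((G^^n) b) ((G^^n) v)) \<longlonglongrightarrow> 0))"
      using Vfull by blast
    then show "\<exists>\<delta>>0. \<forall>a\<in>X. \<forall>b\<in>X. dist a b < \<delta> \<longrightarrow> (\<exists>v\<in>X. (\<forall>n. dist ((F^^n) a) ((F^^n) v) \<le> \<epsilon>) \<and> ((\<lambda>n. dist ((F^^n) a) ((F^^n) v)) \<longlonglongrightarrow> 0) \<and> (\<forall>n. dist ((G^^n) b) ((G^^n) v) \<le> \<epsilon>))"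
      by blast
  qed
  have QG: "\<forall>\<epsilon>>0. \<exists>\<delta>>0. \<forall>a\<in>X. \<forall>b\<in>X. dist a b < \<delta> \<longrightarrow> (\<exists>v\<in>X. (\<forall>n. dist ((G^^n) a) ((G^^n) v) \<le> \<epsilon>) \<and> ((\<lambda>n. dist ((G^^n) a) ((G^^n) v)) \<longlonglongrightarrow> 0) \<and> (\<forall>n. dist ((F^^n) b) ((F^^n) v) \<le> \<epsilon>))"
  proof (intro allI impI)
    fix \<epsilon> :: real assume "\<epsilon> > 0"
    then obtain \<delta> where "\<delta> > 0" and h: "\<forall>a\<in>X. \<forall>b\<in>X. dist a b < \<delta> \<longrightarrow> (\<exists>v\<in>X. (\<forall>n. dist ((F^^n) a) ((F^^n) v) \<le> \<epsilon>) \<and> ((\<lambda>n. dist ((F^^n) a) ((F^^n) v)) \<longlonglongrightarrow> 0) \<and> (\<forall>n. dist ((G^^n) b) ((G^^n) v) \<le> \<epsilon>) \<and> ((\<lambda>n. dist ((G^^n) b) ((G^^n) v)) \<longlonglongrightarrow> 0))"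
      using Vfull by blast
    show "\<exists>\<delta>>0. \<forall>a\<in>X. \<forall>b\<in>X. dist a b < \<delta> \<longrightarrow> (\<exists>v\<in>X. (\<forall>n. dist ((G^^n) a) ((G^^n) v) \<le> \<epsilon>) \<and> ((\<lambda>n. dist ((G^^n) a) ((G^^n) v)) \<longlonglongrightarrow> 0) \<and> (\<forall>n. dist ((F^^n) b) ((F^^n) v) \<le> \<epsilon>))"
    proof (intro exI[of _ \<delta>] conjI ballI impI)
      show "\<delta> > 0" by fact
      fix a b assume "a \<in> X" "b \<in> X" "dist a b < \<delta>"
      then have "dist b a < \<delta>" by (simp add: dist_commute)
      then show "\<exists>v\<in>X. (\<forall>n. dist ((G^^n) a) ((G^^n) v) \<le> \<epsilon>) \<and> ((\<lambda>n. dist ((G^^n) a) ((G^^n) v)) \<longlonglongrightarrow> 0) \<and> (\<forall>n. dist ((F^^n) b) ((F^^n) v) \<le> \<epsilon>)"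
        using h \<open>a \<in> X\<close> \<open>b \<in> X\<close> by blast
    qed
  qed
  note fwdF = forward[OF shad_PF[OF sh] QF]
  note fwdG = B.forward[OF shad_PG[OF sh] QG]
  show ?thesis unfolding L_shadowing_def
  proof (intro allI impI)
    fix \<epsilon> :: real assume \<epsilon>: "\<epsilon> > 0"
    then have "\<epsilon>/2 > 0" by simp
    then obtain \<delta>V where \<delta>V: "\<delta>V > 0" and hV: "\<forall>a\<in>X. \<forall>b\<in>X. dist a b < \<delta>V \<longrightarrow> (\<exists>v\<in>X. (\<forall>n. dist ((F^^n) a) ((F^^n) v) \<le> \<epsilon>/2) \<and> ((\<lambda>n. dist ((F^^n) a) ((F^^n) v)) \<longlonglongrightarrow> 0) \<and> (\<forall>n. dist ((G^^n) b) ((G^^n) v) \<le> \<epsilon>/2) \<and> ((\<lambda>n. dist ((G^^n) b) ((G^^n) v)) \<longlonglongrightarrow> 0))"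
      using Vfull by blast
    define \<eta> where "\<eta> = min (\<epsilon>/4) (\<delta>V/3)"
    have \<eta>: "\<eta> > 0" using \<epsilon> \<delta>V by (simp add: \<eta>_def)
    obtain \<delta>1 where \<delta>1: "\<delta>1 > 0" and h1: "\<forall>x::nat\<Rightarrow>'a. (\<forall>k. x k \<in> X) \<longrightarrow> (\<forall>k. dist (F (x k)) (x (Suc k)) \<le> \<delta>1) \<longrightarrow> ((\<lambda>k. dist (F (x k)) (x (Suc k))) \<longlonglongrightarrow> 0) \<longrightarrow> (\<exists>z\<in>X. (\<forall>k. dist ((F^^k) z) (x k) \<le> \<eta>) \<and> ((\<lambda>k. dist ((F^^k) z) (x k)) \<longlonglongrightarrow> 0))"
      using fwdF[OF \<eta>] by blast
    obtain \<delta>2 where \<delta>2: "\<delta>2 > 0" and h2: "\<forall>x::nat\<Rightarrow>'a. (\<forall>k. x k \<in> X) \<longrightarrow> (\<forall>k. dist (G (x k)) (x (Suc k)) \<le> \<delta>2) \<longrightarrow> ((\<lambda>k. dist (G (x k)) (x (Suc k))) \<longlonglongrightarrow> 0) \<longrightarrow> (\<exists>z\<in>X. (\<forall>k. dist ((G^^k) z) (x k) \<le> \<eta>) \<and> ((\<lambda>k. dist ((G^^k) z) (x k)) \<longlonglongrightarrow> 0))"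
      using fwdG[OF \<eta>] by blast
    obtain \<sigma> where \<sigma>: "\<sigma> > 0" and h\<sigma>: "\<forall>a\<in>X. \<forall>b\<in>X. dist a b < \<sigma> \<longrightarrow> dist (G a) (G b) < \<delta>2"
      using B.ucF[OF \<delta>2] by blast
    show "\<exists>\<delta>>0. \<forall>x::int \<Rightarrow> 'a. (\<forall>k. x k \<in> X) \<longrightarrow>
        (\<forall>k. dist (F (x k)) (x (k+1)) \<le> \<delta>) \<longrightarrow>
        ((\<lambda>k. dist (F (x k)) (x (k+1))) \<longlongrightarrow> 0) at_top \<longrightarrow>
        ((\<lambda>k. dist (F (x k)) (x (k+1))) \<longlongrightarrow> 0) at_bot \<longrightarrow>
        (\<exists>z\<in>X. (\<forall>k. dist (iter_int F G k z) (x k) \<le> \<epsilon>) \<and>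
               ((\<lambda>k. dist (iter_int F G k z) (x k)) \<longlongrightarrow> 0) at_top \<and>
               ((\<lambda>k. dist (iter_int F G k z) (x k)) \<longlongrightarrow> 0) at_bot)"
    proof (intro exI[of _ "min \<delta>1 (\<sigma>/2)"] conjI allI impI)
      show "min \<delta>1 (\<sigma>/2) > 0" using \<delta>1 \<sigma> by simp
      fix x :: "int \<Rightarrow> 'a"
      assume xX: "\<forall>k. x k \<in> X" and xd: "\<forall>k. dist (F (x k)) (x (k+1)) \<le> min \<delta>1 (\<sigma>/2)"
        and xt: "((\<lambda>k. dist (F (x k)) (x (k+1))) \<longlongrightarrow> 0) at_top"
        and xb: "((\<lambda>k. dist (F (x k)) (x (k+1))) \<longlongrightarrow> 0) at_bot"
      have "\<exists>zp\<in>X. (\<forall>k. dist ((F^^k) zp) (x (int k)) \<le> \<eta>) \<and> ((\<lambda>k. dist ((F^^k) zp) (x (int k))) \<longlonglongrightarrow> 0)"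
      proof (rule h1[rule_format])
        show "x (int k) \<in> X" for k using xX by simp
        show "dist (F (x (int k))) (x (int (Suc k))) \<le> \<delta>1" for k
          using xd[rule_format, of "int k"] by (simp add: add.commute)
        show "(\<lambda>k. dist (F (x (int k))) (x (int (Suc k)))) \<longlonglongrightarrow> 0" unfolding lim0_seq
        proof (intro allI impI)
          fix e :: real assume "e > 0"
          then obtain K where K: "\<forall>k\<ge>K. \<bar>dist (F (x k)) (x (k+1))\<bar> < e" using xt unfolding lim0_top by blast
          show "\<exists>K. \<forall>k\<ge>K. \<bar>dist (F (x (int k))) (x (int (Suc k)))\<bar> < e"
          proof (intro exI[of _ "nat K"] allI impI)
            fix k assume "nat K \<le> k"
            then have "int k \<ge> K" by linarith
            then have "\<bar>dist (F (x (int k))) (x (int k + 1))\<bar> < e" using K by blast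
            then show "\<bar>dist (F (x (int k))) (x (int (Suc k)))\<bar> < e" by (simp add: add.commute)
          qed
        qed
      qed
      then obtain zp where zpX: "zp \<in> X" and zp1: "\<forall>k. dist ((F^^k) zp) (x (int k)) \<le> \<eta>"
        and zp2: "(\<lambda>k. dist ((F^^k) zp) (x (int k))) \<longlonglongrightarrow> 0" by blast
      have bk: "dist (G (x (- int k))) (x (- int (Suc k))) < e" if "e > 0" "dist (F (x (- int (Suc k)))) (x (- int k)) < tt"
        "\<forall>a\<in>X. \<forall>b\<in>X. dist a b < tt \<longrightarrow> dist (G a) (G b) < e" for k e tt
      proof -
        have "dist (G (F (x (- int (Suc k))))) (G (x (- int k))) < e" using that xX FX by blast
        then show ?thesis using GF xX by (simp add: dist_commute)
      qed
      have xstep: "x (- int (Suc k) + 1) = x (- int k)" for k by simp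
      have "\<exists>zm\<in>X. (\<forall>k. dist ((G^^k) zm) (x (- int k)) \<le> \<eta>) \<and> ((\<lambda>k. dist ((G^^k) zm) (x (- int k))) \<longlonglongrightarrow> 0)"
      proof (rule h2[rule_format])
        show "x (- int k) \<in> X" for k using xX by simp
        show "dist (G (x (- int k))) (x (- int (Suc k))) \<le> \<delta>2" for k
        proof -
          have "dist (F (x (- int (Suc k)))) (x (- int (Suc k) + 1)) \<le> min \<delta>1 (\<sigma>/2)" using xd by blast
          then have "dist (F (x (- int (Suc k)))) (x (- int k)) \<le> min \<delta>1 (\<sigma>/2)" by (simp only: xstep)
          then have "dist (F (x (- int (Suc k)))) (x (- int k)) < \<sigma>" using \<sigma> by linarith
          then show ?thesis using bk[OF \<delta>2 _ h\<sigma>] by (simp add: less_imp_le)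
        qed
        show "(\<lambda>k. dist (G (x (- int k))) (x (- int (Suc k)))) \<longlonglongrightarrow> 0" unfolding lim0_seq
        proof (intro allI impI)
          fix e :: real assume e: "e > 0"
          obtain tt where tt: "tt > 0" and htt: "\<forall>a\<in>X. \<forall>b\<in>X. dist a b < tt \<longrightarrow> dist (G a) (G b) < e"
            using B.ucF[OF e] by blast
          obtain K where K: "\<forall>k\<le>K. \<bar>dist (F (x k)) (x (k+1))\<bar> < tt" using xb tt unfolding lim0_bot by blast
          show "\<exists>K. \<forall>k\<ge>K. \<bar>dist (G (x (- int k))) (x (- int (Suc k)))\<bar> < e"
          proof (intro exI[of _ "nat (-K)"] allI impI)
            fix k assume "nat (-K) \<le> k"
            then have "- int (Suc k) \<le> K" by linarith
            then have "dist (F (x (- int (Suc k)))) (x (- int (Suc k) + 1)) < tt" using K by auto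
            then have "dist (F (x (- int (Suc k)))) (x (- int k)) < tt" by (simp only: xstep)
            then show "\<bar>dist (G (x (- int k))) (x (- int (Suc k)))\<bar> < e" using bk[OF e _ htt] by simp
          qed
        qed
      qed
      then obtain zm where zmX: "zm \<in> X" and zm1: "\<forall>k. dist ((G^^k) zm) (x (- int k)) \<le> \<eta>"
        and zm2: "(\<lambda>k. dist ((G^^k) zm) (x (- int k))) \<longlonglongrightarrow> 0" by blast
      have "dist zp (x 0) \<le> \<eta>" using zp1[rule_format, of 0] by simp
      moreover have "dist zm (x 0) \<le> \<eta>" using zm1[rule_format, of 0] by simp
      moreover have "dist zp zm \<le> dist zp (x 0) + dist zm (x 0)" by (rule dist_triangle2)
      ultimately have "dist zp zm < \<delta>V" using \<delta>V unfolding \<eta>_def by linarith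
      then obtain v where vX: "v \<in> X" and a1: "\<forall>n. dist ((F^^n) zp) ((F^^n) v) \<le> \<epsilon>/2"
        and a2: "(\<lambda>n. dist ((F^^n) zp) ((F^^n) v)) \<longlonglongrightarrow> 0"
        and b1: "\<forall>n. dist ((G^^n) zm) ((G^^n) v) \<le> \<epsilon>/2"
        and b2: "(\<lambda>n. dist ((G^^n) zm) ((G^^n) v)) \<longlonglongrightarrow> 0"
        using hV zpX zmX by blast
      have \<eta>4: "\<eta> \<le> \<epsilon>/4" by (simp add: \<eta>_def)
      have trip: "dist ((F^^n) v) (x (int n)) \<le> dist ((F^^n) zp) ((F^^n) v) + dist ((F^^n) zp) (x (int n))" for n
        by (rule dist_triangle3)
      have trim: "dist ((G^^n) v) (x (- int n)) \<le> dist ((G^^n) zm) ((G^^n) v) + dist ((G^^n) zm) (x (- int n))" for n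
        by (rule dist_triangle3)
      have nn: "\<exists>n. k = int n \<or> k = - int n" for k :: int
        by (metis int_cases2)
      show "\<exists>z\<in>X. (\<forall>k. dist (iter_int F G k z) (x k) \<le> \<epsilon>) \<and>
               ((\<lambda>k. dist (iter_int F G k z) (x k)) \<longlongrightarrow> 0) at_top \<and>
               ((\<lambda>k. dist (iter_int F G k z) (x k)) \<longlongrightarrow> 0) at_bot"
      proof (intro bexI[OF _ vX] conjI allI)
        fix k :: int
        obtain n where "k = int n \<or> k = - int n" using nn by blast
        then show "dist (iter_int F G k v) (x k) \<le> \<epsilon>"
        proof
          assume k: "k = int n"
          show ?thesis using trip[of n] a1[rule_format, of n] zp1[rule_format, of n] \<eta>4 \<epsilon> unfolding k iter_pos
            by linarith
        next
          assume k: "k = - int n"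
          show ?thesis using trim[of n] b1[rule_format, of n] zm1[rule_format, of n] \<eta>4 \<epsilon> unfolding k iter_neg
            by linarith
        qed
      next
        show "((\<lambda>k. dist (iter_int F G k v) (x k)) \<longlongrightarrow> 0) at_top" unfolding lim0_top
        proof (intro allI impI)
          fix e :: real assume e: "e > 0"
          then have e2: "e/2 > 0" by simp
          obtain K1 where K1: "\<forall>n\<ge>K1. \<bar>dist ((F^^n) zp) ((F^^n) v)\<bar> < e/2" using a2 e2 unfolding lim0_seq by blast
          obtain K2 where K2: "\<forall>n\<ge>K2. \<bar>dist ((F^^n) zp) (x (int n))\<bar> < e/2" using zp2 e2 unfolding lim0_seq by blast
          show "\<exists>K. \<forall>k\<ge>K. \<bar>dist (iter_int F G k v) (x k)\<bar> < e"
          proof (intro exI[of _ "int (max K1 K2)"] allI impI)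
            fix k assume kK: "int (max K1 K2) \<le> k"
            define n where "n = nat k"
            have k: "k = int n" and n1: "n \<ge> K1" and n2: "n \<ge> K2" using kK unfolding n_def by auto
            have "dist ((F^^n) v) (x (int n)) < e" using trip[of n] K1[rule_format, OF n1] K2[rule_format, OF n2] by simp
            then show "\<bar>dist (iter_int F G k v) (x k)\<bar> < e" unfolding k iter_pos by simp
          qed
        qed
      next
        show "((\<lambda>k. dist (iter_int F G k v) (x k)) \<longlongrightarrow> 0) at_bot" unfolding lim0_bot
        proof (intro allI impI)
          fix e :: real assume e: "e > 0"
          then have e2: "e/2 > 0" by simp
          obtain K1 where K1: "\<forall>n\<ge>K1. \<bar>dist ((G^^n) zm) ((G^^n) v)\<bar> < e/2" using b2 e2 unfolding lim0_seq by blast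
          obtain K2 where K2: "\<forall>n\<ge>K2. \<bar>dist ((G^^n) zm) (x (- int n))\<bar> < e/2" using zm2 e2 unfolding lim0_seq by blast
          show "\<exists>K. \<forall>k\<le>K. \<bar>dist (iter_int F G k v) (x k)\<bar> < e"
          proof (intro exI[of _ "- int (max K1 K2)"] allI impI)
            fix k assume kK: "k \<le> - int (max K1 K2)"
            define n where "n = nat (-k)"
            have k: "k = - int n" and n1: "n \<ge> K1" and n2: "n \<ge> K2" using kK unfolding n_def by auto
            have "dist ((G^^n) v) (x (- int n)) < e" using trim[of n] K1[rule_format, OF n1] K2[rule_format, OF n2] by simp
            then show "\<bar>dist (iter_int F G k v) (x k)\<bar> < e" unfolding k iter_neg by simp
          qed
        qed
      qed
    qed
  qed
qed

end

theorem theoremD: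
  fixes X :: "'a::metric_space set" and f g :: "'a \<Rightarrow> 'a"
  assumes "compact X" and "homeomorphism X X f g"
  shows "L_shadowing X f g \<longleftrightarrow>
           shadowing X f g \<and>
           (\<forall>\<epsilon>>0. \<exists>\<delta>>0. \<forall>x\<in>X. \<forall>y\<in>X. dist x y < \<delta> \<longrightarrow>
               Vs X f \<epsilon> x \<inter> Vu X g \<epsilon> y \<noteq> {})"
proof -
  interpret hsys X f g using assms by unfold_locales
  show ?thesis using L_imp_shadowing L_imp_V SV_imp_L by blast
qed


end
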